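(* Let $X$ and $Y$ be $\mathbb{N}$-valued random variables with $P\{X=0\}\ne1$, $P\{Y=0\}\neq 1$ and $\mathbb{E}[X^r+Y^r]<+\infty$ for some $r\in(1,2]$, and set $\alpha_r=\mathbb{E}[X]^r+\mathbb{E}[Y]^r-1$. Let $f^{(1)}_t$ and $f^{(2)}_t$ be the solutions of the kinetic equation (defined in the context) with initial probability densities $f_0^{(1)}$ and $f_0^{(2)}$ on $\mathbb{N}$ such that $\sum_v vf_0^{(1)}(v)=\sum_v vf_0^{(2)}(v)=m_0$. Then for every $t>0$ $$d_r(f_t^{(1)},f_t^{(2)})\le d_r(f_0^{(1)},f_0^{(2)})\,e^{\alpha_r t}\quad\text{and}\quad d_r^*(f_t^{(1)},f_t^{(2)})\le d_r^*(f_0^{(1)},f_0^{(2)})\,e^{\alpha_r t}.$$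
   Context: For a probability density $f$ on $\mathbb{N}$, $\hat f(z)=\sum_{v\ge0}z^vf(v)$ ($z\in[0,1]$) is its probability generating function and $\tilde f(\xi)=\sum_{v\ge0}e^{-\xi v}f(v)$ ($\xi>0$) its Laplace transform. Let $\hat p_X(z)=\mathbb{E}[z^X]$, $\hat p_Y(z)=\mathbb{E}[z^Y]$. The kinetic equation is $\partial_t f_t(v)=Q^+(f_t,f_t)(v)-f_t(v)$ on $\mathbb{N}$, where $Q^+(f,g)(v)=P\{\sum_{i=1}^{V_1}Y_i+\sum_{i=1}^{V_2}X_i=v\}$, $V_1\sim f$, $V_2\sim g$, $X_i$ i.i.d. $\sim X$, $Y_i$ i.i.d. $\sim Y$, all independent; equivalently $\partial_t\hat f_t(z)=\hat f_t(\hat p_X(z))\hat f_t(\hat p_Y(z))-\hat f_t(z)$, $z\in[0,1]$, which has a unique global solution for each initial probability density. The metrics are $$d_r(f,g)=\sup_{z\in(0,1)}\frac{|\hat f(z)-\hat g(z)|}{|1-z|^r},\qquad d_r^*(f,g)=\sup_{\xi>0}\frac{|\tilde f(\xi)-\tilde g(\xi)|}{\xi^r}.$$ *)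

theory Defs
  imports "HOL-Probability.Probability"
begin

definition pgf :: "nat pmf \<Rightarrow> real \<Rightarrow> real" where
  "pgf p z = (\<Sum>v. z ^ v * pmf p v)"

definition laplace :: "nat pmf \<Rightarrow> real \<Rightarrow> real" where
  "laplace p \<xi> = (\<Sum>v. exp (- \<xi> * real v) * pmf p v)"

definition d_r :: "real \<Rightarrow> nat pmf \<Rightarrow> nat pmf \<Rightarrow> ereal" where
  "d_r r f g = (SUP z\<in>{0<..<1::real}. ereal (\<bar>pgf f z - pgf g z\<bar> / \<bar>1 - z\<bar> powr r))"

definition d_r_star :: "real \<Rightarrow> nat pmf \<Rightarrow> nat pmf \<Rightarrow> ereal" where
  "d_r_star r f g = (SUP \<xi>\<in>{0<..}. ereal (\<bar>laplace f \<xi> - laplace g \<xi>\<bar> / \<xi> powr r))"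

text \<open>f (a family of probability densities indexed by time t \<ge> 0) solves the kinetic
  equation in generating-function form, with initial datum f 0.\<close>
definition kinetic_solution :: "nat pmf \<Rightarrow> nat pmf \<Rightarrow> (real \<Rightarrow> nat pmf) \<Rightarrow> bool" where
  "kinetic_solution pX pY f \<longleftrightarrow>
     (\<forall>t\<ge>0. \<forall>z\<in>{0..1}.
        ((\<lambda>s. pgf (f s) z) has_real_derivative
           (pgf (f t) (pgf pX z) * pgf (f t) (pgf pY z) - pgf (f t) z)) (at t within {0..}))"

end

theory Submission imports Defs begin

lemma pmf_sums_expectation:
  fixes p :: "nat pmf" and g :: "nat \<Rightarrow> real"
  assumes "integrable (measure_pmf p) g"
  shows "(\<lambda>v. pmf p v * g v) sums measure_pmf.expectation p g"
proof -
  have "integrable (count_space UNIV) (\<lambda>v. pmf p v *\<^sub>R g v)"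
    using assms by (simp add: measure_pmf_eq_density integrable_density pmf_nonneg)
  from sums_integral_count_space_nat[OF this]
  show ?thesis
    by (simp add: measure_pmf_eq_density integral_density pmf_nonneg)
qed

lemma integrable_pow:
  fixes p :: "nat pmf" and z :: real
  assumes "z \<in> {0..1}"
  shows "integrable (measure_pmf p) (\<lambda>v. z ^ v)"
  using assms by (intro measure_pmf.integrable_const_bound[where B=1]) (auto simp: power_le_one)

lemma pgf_expectation:
  assumes "z \<in> {0..1}"
  shows "pgf p z = measure_pmf.expectation p (\<lambda>v. z ^ v)"
  using pmf_sums_expectation[OF integrable_pow[OF assms, of p]]
  unfolding pgf_def by (simp add: sums_iff mult.commute)

lemma pgf_nonneg: "z \<in> {0..1} \<Longrightarrow> 0 \<le> pgf p z"
  by (simp add: pgf_expectation)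

lemma pgf_le1: "z \<in> {0..1} \<Longrightarrow> pgf p z \<le> 1"
proof -
  assume z: "z \<in> {0..1}"
  have "measure_pmf.expectation p (\<lambda>v. z ^ v) \<le> measure_pmf.expectation p (\<lambda>v. 1)"
    using z by (intro integral_mono integrable_pow) (auto simp: power_le_one)
  then show ?thesis using z by (simp add: pgf_expectation)
qed

lemma pgf_one: "pgf p 1 = 1"
  by (simp add: pgf_expectation)

lemma pgf_pos: "z \<in> {0<..1} \<Longrightarrow> 0 < pgf p z"
proof -
  assume z: "z \<in> {0<..1}"
  obtain v0 where v0: "v0 \<in> set_pmf p" using set_pmf_not_empty[of p] by blast
  have s: "summable (\<lambda>v. pmf p v * z ^ v)"
    using pmf_sums_expectation[OF integrable_pow, of z p] z by (auto simp: sums_iff)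
  have "0 < pmf p v0 * z ^ v0" using v0 z by (simp add: pmf_positive)
  also have "\<dots> \<le> (\<Sum>v. pmf p v * z ^ v)"
    using z by (intro sum_le_suminf[OF s, of "{v0}", simplified]) auto
  finally show ?thesis unfolding pgf_def by (simp add: mult.commute)
qed

lemma integrable_real_of_powr:
  fixes p :: "nat pmf"
  assumes "r \<ge> 1" "integrable (measure_pmf p) (\<lambda>v. real v powr r)"
  shows "integrable (measure_pmf p) real"
proof (rule Bochner_Integration.integrable_bound[OF assms(2)])
  show "AE x in measure_pmf p. norm (real x) \<le> norm (real x powr r)"
  proof (intro AE_I2)
    fix x :: nat
    show "norm (real x) \<le> norm (real x powr r)"
    proof (cases "x = 0")
      case False
      then have "real x powr 1 \<le> real x powr r" using assms(1) by (intro powr_mono) auto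
      then show ?thesis by simp
    qed simp
  qed
qed simp

lemma one_minus_pgf:
  assumes "integrable (measure_pmf p) real" "z \<in> {0..1}"
  shows "1 - pgf p z \<le> measure_pmf.expectation p real * (1 - z)"
proof -
  have "1 - pgf p z = measure_pmf.expectation p (\<lambda>v. 1 - z ^ v)"
    using assms integrable_pow[OF assms(2), of p] by (simp add: pgf_expectation)
  also have "\<dots> \<le> measure_pmf.expectation p (\<lambda>v. real v * (1 - z))"
  proof (intro integral_mono)
    show "integrable (measure_pmf p) (\<lambda>v. 1 - z ^ v)" using integrable_pow[OF assms(2), of p] by simp
    show "integrable (measure_pmf p) (\<lambda>v. real v * (1 - z))" using assms(1) by simp
    fix v :: nat
    have "1 - z ^ v = (1 - z) * (\<Sum>i<v. z ^ i)"
      by (simp add: one_diff_power_eq)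
    also have "\<dots> \<le> (1 - z) * (\<Sum>i<v. 1)"
      using assms(2) by (intro mult_left_mono sum_mono) (auto simp: power_le_one)
    finally show "1 - z ^ v \<le> real v * (1 - z)" by (simp add: mult.commute)
  qed
  also have "\<dots> = measure_pmf.expectation p real * (1 - z)" by simp
  finally show ?thesis .
qed

lemma pgf_ge_powr:
  assumes "integrable (measure_pmf p) real" "w \<in> {0<..1}"
  shows "exp (measure_pmf.expectation p real * ln w) \<le> pgf p w"
proof -
  define \<mu> where "\<mu> = measure_pmf.expectation p real"
  define L where "L = ln w"
  have wv: "w ^ v = exp (real v * L)" for v
    using assms(2) by (simp add: L_def exp_of_nat_mult)
  have "exp (\<mu> * L) = measure_pmf.expectation p (\<lambda>v. exp (\<mu> * L) * (1 + (real v * L - \<mu> * L)))"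
    using assms(1) by (simp add: \<mu>_def algebra_simps)
  also have "\<dots> \<le> measure_pmf.expectation p (\<lambda>v. w ^ v)"
  proof (intro integral_mono)
    show "integrable (measure_pmf p) (\<lambda>v. exp (\<mu> * L) * (1 + (real v * L - \<mu> * L)))"
      using assms(1) by simp
    show "integrable (measure_pmf p) (\<lambda>v. w ^ v)" using integrable_pow assms(2) by auto
    fix v :: nat
    have "exp (\<mu> * L) * (1 + (real v * L - \<mu> * L)) \<le> exp (\<mu> * L) * exp (real v * L - \<mu> * L)"
      by (intro mult_left_mono) auto
    also have "\<dots> = w ^ v" by (simp add: wv flip: exp_add)
    finally show "exp (\<mu> * L) * (1 + (real v * L - \<mu> * L)) \<le> w ^ v" .
  qed
  finally show ?thesis using assms(2) by (simp add: pgf_expectation \<mu>_def L_def)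
qed

lemma laplace_pgf: "laplace p \<xi> = pgf p (exp (- \<xi>))"
  unfolding laplace_def pgf_def by (simp add: exp_of_nat_mult[symmetric] mult.commute)


lemma abs_diff_le_by_deriv:
  fixes u P u' P' :: "real \<Rightarrow> real"
  assumes T: "0 \<le> T"
    and du: "\<And>s. s \<in> {0..T} \<Longrightarrow> (u has_real_derivative u' s) (at s within {0..})"
    and dP: "\<And>s. (P has_real_derivative P' s) (at s)"
    and le: "\<And>s. s \<in> {0..T} \<Longrightarrow> \<bar>u' s\<bar> \<le> P' s"
  shows "\<bar>u T - u 0\<bar> \<le> P T - P 0"
proof -
  have cu: "continuous_on {0..T} u"
    unfolding continuous_on_eq_continuous_within
  proof
    fix s assume s: "s \<in> {0..T}"
    have "continuous (at s within {0..}) u"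
      using du[OF s] by (rule DERIV_continuous)
    then show "continuous (at s within {0..T}) u"
      by (rule continuous_within_subset) auto
  qed
  have cP: "continuous_on {0..T} P"
    using dP by (intro continuous_at_imp_continuous_on ballI DERIV_isCont) auto
  have duat: "(u has_real_derivative u' s) (at s)" if "0 < s" "s < T" for s
  proof -
    have "(u has_real_derivative u' s) (at s within {0<..})"
    proof -
      have "s \<in> {0..T}" using that by auto
      have "{0<..} \<subseteq> {0::real..}" by auto
      from DERIV_subset[OF du[OF \<open>s \<in> {0..T}\<close> ] this] show ?thesis .
    qed
    then show ?thesis using that by (simp add: at_within_open[of s "{0<..}"])
  qed
  have 1: "(\<lambda>s. P s - u s) 0 \<le> (\<lambda>s. P s - u s) T"
  proof (rule DERIV_nonneg_imp_increasing_open[OF T])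
    fix x assume "0 < x" "x < T"
    then show "\<exists>y. ((\<lambda>s. P s - u s) has_real_derivative y) (at x) \<and> 0 \<le> y"
      using le[of x] by (intro exI[of _ "P' x - u' x"]) (auto intro!: derivative_eq_intros dP duat)
  qed (intro continuous_on_diff cu cP)
  have 2: "(\<lambda>s. P s + u s) 0 \<le> (\<lambda>s. P s + u s) T"
  proof (rule DERIV_nonneg_imp_increasing_open[OF T])
    fix x assume "0 < x" "x < T"
    then show "\<exists>y. ((\<lambda>s. P s + u s) has_real_derivative y) (at x) \<and> 0 \<le> y"
      using le[of x] by (intro exI[of _ "P' x + u' x"]) (auto intro!: derivative_eq_intros dP duat)
  qed (intro continuous_on_add cu cP)
  show ?thesis using 1 2 by simp
qed

definition E :: "nat \<Rightarrow> real \<Rightarrow> real" where "E n x = (\<Sum>k<n. x ^ k / fact k)"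

lemma E_deriv: "((\<lambda>s. E (Suc n) (c * s)) has_real_derivative c * E n (c * s)) (at s)"
proof (induction n)
  case 0
  then show ?case by (simp add: E_def)
next
  case (Suc n)
  have eq: "E (Suc (Suc n)) x = E (Suc n) x + x ^ Suc n / fact (Suc n)" for x
    by (simp add: E_def)
  have d: "((\<lambda>s. (c * s) ^ Suc n / fact (Suc n)) has_real_derivative c * ((c * s) ^ n / fact n)) (at s)"
  proof -
    have h: "((\<lambda>s. (c * s)^ Suc n) has_real_derivative real (Suc n) * (c * s) ^ n * c) (at s)"
      apply (rule derivative_eq_intros refl)+
      by (cases n) (auto simp: algebra_simps)
    have eq2: "real (Suc n) * (c * s) ^ n * c / fact (Suc n) = c * ((c * s) ^ n/fact n)"
      by (simp add: fact_Suc field_simps del: of_nat_Suc)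
    show ?thesis using DERIV_cdivide[OF h, of "fact (Suc n)"] unfolding eq2 .
  qed
  show ?case unfolding eq
    using DERIV_add[OF Suc d] by (simp add: E_def distrib_left)
qed

lemma E_nonneg: "0 \<le> x \<Longrightarrow> 0 \<le> E n x"
  by (auto simp: E_def intro!: sum_nonneg)

lemma E_le_exp: "0 \<le> x \<Longrightarrow> E n x \<le> exp x"
proof -
  assume x: "0 \<le> x"
  have "E n x = (\<Sum>k<n. x ^ k /\<^sub>R fact k)" by (simp add: E_def divide_inverse mult.commute)
  also have "\<dots> \<le> (\<Sum>k. x ^ k /\<^sub>R fact k)"
    using x by (intro sum_le_suminf summable_exp_generic) auto
  also have "\<dots> = exp x" by (simp add: exp_def)
  finally show ?thesis .
qed


lemma pow_fact_deriv:
  "((\<lambda>s. (c * s) ^ Suc n / fact (Suc n)) has_real_derivative c * ((c * s) ^ n / fact n)) (at s)"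
proof -
  have h: "((\<lambda>s. (c * s) ^ Suc n) has_real_derivative real (Suc n) * (c * s) ^ n * c) (at s)"
    apply (rule derivative_eq_intros refl)+
    by (cases n) (auto simp: algebra_simps)
  have eq2: "real (Suc n) * (c * s) ^ n * c / fact (Suc n) = c * ((c * s) ^ n / fact n)"
    by (simp add: fact_Suc field_simps del: of_nat_Suc)
  show ?thesis using DERIV_cdivide[OF h, of "fact (Suc n)"] unfolding eq2 .
qed

lemma E_Suc_0: "E (Suc n) 0 = 1"
  by (induction n) (auto simp: E_def)

lemma main_bound:
  fixes pX pY :: "nat pmf" and f1 f2 :: "real \<Rightarrow> nat pmf" and \<omega> :: "real \<Rightarrow> real"
    and a b D0 T w :: real
  assumes k1: "kinetic_solution pX pY f1" and k2: "kinetic_solution pX pY f2"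
    and \<omega>nn: "\<And>w. w \<in> {0<..1} \<Longrightarrow> 0 \<le> \<omega> w"
    and \<omega>X: "\<And>w. w \<in> {0<..1} \<Longrightarrow> \<omega> (pgf pX w) \<le> a * \<omega> w"
    and \<omega>Y: "\<And>w. w \<in> {0<..1} \<Longrightarrow> \<omega> (pgf pY w) \<le> b * \<omega> w"
    and init: "\<And>w. w \<in> {0<..1} \<Longrightarrow> \<bar>pgf (f1 0) w - pgf (f2 0) w\<bar> \<le> D0 * \<omega> w"
    and ab: "0 \<le> a" "0 \<le> b" and D0: "0 \<le> D0" and T: "0 \<le> T" and w: "w \<in> {0<..1}"
  shows "\<bar>pgf (f1 T) w - pgf (f2 T) w\<bar> \<le> D0 * \<omega> w * exp ((a + b - 1) * T)"
proof -
  define h where "h s w = pgf (f1 s) w - pgf (f2 s) w" for s w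
  define c where "c = a + b"
  have rng: "pgf p w \<in> {0<..1}" if "w \<in> {0<..1}" for p w
    using that pgf_pos[OF that, of p] pgf_le1[of w p] by auto
  have hb: "\<bar>h s w\<bar> \<le> 1" if "w \<in> {0..1}" for s w
    using pgf_nonneg[OF that] pgf_le1[OF that] unfolding h_def
    by (smt (verit) that)
  have pb: "\<bar>pgf p w\<bar> \<le> 1" if "w \<in> {0..1}" for p w
    using pgf_nonneg[OF that] pgf_le1[OF that] by (smt (verit) that)
  define D where "D s w = exp s * (h s (pgf pX w) * pgf (f1 s) (pgf pY w) + pgf (f2 s) (pgf pX w) * h s (pgf pY w))" for s w
  have deriv: "((\<lambda>s. exp s * h s w) has_real_derivative D s w) (at s within {0..})"
    if "0 \<le> s" "w \<in> {0..1}" for s w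
  proof -
    have d1: "((\<lambda>s. pgf (f1 s) w) has_real_derivative
           (pgf (f1 s) (pgf pX w) * pgf (f1 s) (pgf pY w) - pgf (f1 s) w)) (at s within {0..})"
      using k1 that unfolding kinetic_solution_def by auto
    have d2: "((\<lambda>s. pgf (f2 s) w) has_real_derivative
           (pgf (f2 s) (pgf pX w) * pgf (f2 s) (pgf pY w) - pgf (f2 s) w)) (at s within {0..})"
      using k2 that unfolding kinetic_solution_def by auto
    have "((\<lambda>s. exp s * h s w) has_real_derivative
        exp s * h s w + exp s * ((pgf (f1 s) (pgf pX w) * pgf (f1 s) (pgf pY w) - pgf (f1 s) w)
          - (pgf (f2 s) (pgf pX w) * pgf (f2 s) (pgf pY w) - pgf (f2 s) w))) (at s within {0..})"
      unfolding h_def using DERIV_mult[OF has_field_derivative_at_within[OF DERIV_exp] DERIV_diff[OF d1 d2]] by (simp add: mult.commute)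
    moreover have "exp s * h s w + exp s * ((pgf (f1 s) (pgf pX w) * pgf (f1 s) (pgf pY w) - pgf (f1 s) w)
          - (pgf (f2 s) (pgf pX w) * pgf (f2 s) (pgf pY w) - pgf (f2 s) w)) = D s w"
      unfolding D_def h_def by (simp add: algebra_simps)
    ultimately show ?thesis by simp
  qed
  have Dbound: "\<bar>D s w\<bar> \<le> exp s * (\<bar>h s (pgf pX w)\<bar> + \<bar>h s (pgf pY w)\<bar>)"
    if "w \<in> {0<..1}" for s w
  proof -
    have x: "pgf pX w \<in> {0..1}" "pgf pY w \<in> {0..1}" using rng[OF that, of pX] rng[OF that, of pY] by auto
    have "\<bar>h s (pgf pX w) * pgf (f1 s) (pgf pY w) + pgf (f2 s) (pgf pX w) * h s (pgf pY w)\<bar>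
        \<le> \<bar>h s (pgf pX w)\<bar> * \<bar>pgf (f1 s) (pgf pY w)\<bar> + \<bar>pgf (f2 s) (pgf pX w)\<bar> * \<bar>h s (pgf pY w)\<bar>"
      by (metis abs_mult abs_triangle_ineq)
    also have "\<dots> \<le> \<bar>h s (pgf pX w)\<bar> * 1 + 1 * \<bar>h s (pgf pY w)\<bar>"
      by (intro add_mono mult_mono pb x) auto
    finally have "\<bar>h s (pgf pX w) * pgf (f1 s) (pgf pY w) + pgf (f2 s) (pgf pX w) * h s (pgf pY w)\<bar>
        \<le> \<bar>h s (pgf pX w)\<bar> + \<bar>h s (pgf pY w)\<bar>" by simp
    then show ?thesis unfolding D_def abs_mult by (simp add: mult_left_mono)
  qed
  have claim: "\<forall>s\<in>{0..T}. \<forall>w::real\<in>{0<..1}. exp s * \<bar>h s w\<bar> \<le> D0 * \<omega> w * E n (c * s) + exp T * ((2 * s) ^ n / fact n)" for n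
  proof (induction n)
    case 0
    show ?case
    proof (intro ballI)
      fix s w :: real assume s: "s \<in> {0..T}" and w: "w \<in> {0<..1}"
      have "exp s * \<bar>h s w\<bar> \<le> exp s * 1" using hb[of w s] w by (intro mult_left_mono) auto
      also have "\<dots> \<le> exp T" using s by auto
      finally show "exp s * \<bar>h s w\<bar> \<le> D0 * \<omega> w * E 0 (c * s) + exp T * ((2 * s) ^ 0 / fact 0)"
        by (simp add: E_def)
    qed
  next
    case (Suc n)
    show ?case
    proof (intro ballI)
      fix s w :: real assume s: "s \<in> {0..T}" and w: "w \<in> {0<..1}"
      define P where "P t = D0 * \<omega> w * E (Suc n) (c * t) + exp T * ((2 * t) ^ Suc n / fact (Suc n))" for t
      define P' where "P' t = D0 * \<omega> w * (c * E n (c * t)) + exp T * (2 * ((2 * t) ^ n / fact n))" for t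
      have dP: "(P has_real_derivative P' t) (at t)" for t
        unfolding P_def P'_def by (intro DERIV_add DERIV_cmult E_deriv pow_fact_deriv)
      have le: "\<bar>D t w\<bar> \<le> P' t" if t: "t \<in> {0..s}" for t
      proof -
        have tT: "t \<in> {0..T}" using t s by auto
        have wX: "pgf pX w \<in> {0<..1}" and wY: "pgf pY w \<in> {0<..1}" using rng w by auto
        have En: "0 \<le> D0 * E n (c * t)"
          using D0 t \<omega>nn[OF w] ab by (intro mult_nonneg_nonneg E_nonneg) (auto simp: c_def)
        have "\<bar>D t w\<bar> \<le> exp t * \<bar>h t (pgf pX w)\<bar> + exp t * \<bar>h t (pgf pY w)\<bar>"
          using Dbound[OF w, of t] by (simp add: distrib_left)
        also have "\<dots> \<le> (D0 * \<omega> (pgf pX w) * E n (c * t) + exp T * ((2 * t) ^ n / fact n))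
                      + (D0 * \<omega> (pgf pY w) * E n (c * t) + exp T * ((2 * t) ^ n / fact n))"
          using Suc.IH tT wX wY by (intro add_mono) auto
        also have "\<dots> = D0 * E n (c * t) * (\<omega> (pgf pX w) + \<omega> (pgf pY w)) + exp T * (2 * ((2 * t) ^ n / fact n))"
          by (simp add: algebra_simps)
        also have "\<dots> \<le> D0 * E n (c * t) * (c * \<omega> w) + exp T * (2 * ((2 * t) ^ n / fact n))"
          using \<omega>X[OF w] \<omega>Y[OF w] En by (intro add_mono mult_left_mono) (auto simp: c_def algebra_simps)
        also have "\<dots> = P' t" by (simp add: P'_def algebra_simps)
        finally show ?thesis .
      qed
      have du: "((\<lambda>t. exp t * h t w) has_real_derivative D t w) (at t within {0..})" if "t \<in> {0..s}" for t
        using deriv[of t w] that w by auto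
      have main: "\<bar>exp s * h s w - exp 0 * h 0 w\<bar> \<le> P s - P 0"
        using abs_diff_le_by_deriv[of s "\<lambda>t. exp t * h t w" "\<lambda>t. D t w" P P', OF _ du dP le] s
        by (auto simp: w)
      have "P 0 = D0 * \<omega> w" by (simp add: P_def E_Suc_0)
      moreover have "\<bar>h 0 w\<bar> \<le> D0 * \<omega> w" using init[OF w] by (simp add: h_def)
      ultimately have "\<bar>exp s * h s w\<bar> \<le> P s" using main by simp
      then show "exp s * \<bar>h s w\<bar> \<le> D0 * \<omega> w * E (Suc n) (c * s) + exp T * ((2 * s) ^ Suc n / fact (Suc n))"
        by (simp add: P_def abs_mult)
    qed
  qed
  have bound: "exp T * \<bar>h T w\<bar> \<le> D0 * \<omega> w * exp (c * T) + exp T * ((2 * T) ^ n / fact n)" for n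
  proof -
    have "exp T * \<bar>h T w\<bar> \<le> D0 * \<omega> w * E n (c * T) + exp T * ((2 * T) ^ n / fact n)"
      using claim[of n] T w by auto
    also have "D0 * \<omega> w * E n (c * T) \<le> D0 * \<omega> w * exp (c * T)"
      using D0 \<omega>nn[OF w] T \<omega>nn ab
      by (intro mult_left_mono E_le_exp) (auto simp: c_def)
    finally show ?thesis by simp
  qed
  have lim0: "(\<lambda>n. (2 * T) ^ n /\<^sub>R fact n) \<longlonglongrightarrow> 0"
    by (rule summable_LIMSEQ_zero[OF summable_exp_generic])
  have "(\<lambda>n. D0 * \<omega> w * exp (c * T) + exp T * ((2 * T) ^ n /\<^sub>R fact n)) \<longlonglongrightarrow> D0 * \<omega> w * exp (c * T) + exp T * 0"
    by (intro tendsto_intros lim0)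
  then have "exp T * \<bar>h T w\<bar> \<le> D0 * \<omega> w * exp (c * T) + exp T * 0"
    by (rule LIMSEQ_le_const) (use bound in \<open>auto simp: divide_inverse mult.commute\<close>)
  then have "\<bar>h T w\<bar> \<le> D0 * \<omega> w * exp (c * T) / exp T"
    by (simp add: field_simps)
  also have "\<dots> = D0 * \<omega> w * exp ((a + b - 1) * T)"
    by (simp add: c_def algebra_simps exp_diff)
  finally show ?thesis by (simp add: h_def)
qed


lemma ereal_sup_transfer:
  fixes F :: "'a \<Rightarrow> real" and G :: "'b \<Rightarrow> real" and K :: real
  assumes ne: "A \<noteq> {}" and nn: "\<And>x. x \<in> A \<Longrightarrow> 0 \<le> F x" and K: "K > 0"
    and tr: "\<And>D0 y. 0 \<le> D0 \<Longrightarrow> (\<And>x. x \<in> A \<Longrightarrow> F x \<le> D0) \<Longrightarrow> y \<in> B \<Longrightarrow> G y \<le> D0 * K"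
  shows "(SUP y\<in>B. ereal (G y)) \<le> (SUP x\<in>A. ereal (F x)) * ereal K"
proof -
  define S where "S = (SUP x\<in>A. ereal (F x))"
  obtain x0 where x0: "x0 \<in> A" using ne by blast
  have "ereal (F x0) \<le> S" unfolding S_def using x0 by (rule SUP_upper)
  then have S0: "0 \<le> S" using nn[OF x0] by (meson ereal_less_eq(5) order_trans)
  show ?thesis
  proof (cases S)
    case (real D0)
    have D0: "0 \<le> D0" using S0 real by simp
    have Fle: "F x \<le> D0" if "x \<in> A" for x
    proof -
      have "ereal (F x) \<le> S" unfolding S_def using that by (rule SUP_upper)
      then show ?thesis using real by simp
    qed
    have "(SUP y\<in>B. ereal (G y)) \<le> ereal (D0 * K)"
      by (rule SUP_least) (use tr[OF D0 Fle] in auto)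
    then show ?thesis using real by (simp add: S_def[symmetric])
  next
    case PInf
    then show ?thesis using K by (simp add: S_def[symmetric])
  next
    case MInf
    then show ?thesis using S0 by simp
  qed
qed

theorem theorem3p2:
  fixes pX pY :: "nat pmf" and r m0 :: real
    and f1 f2 :: "real \<Rightarrow> nat pmf"
  assumes "pmf pX 0 \<noteq> 1" and "pmf pY 0 \<noteq> 1"
    and "r \<in> {1<..2}"
    and "integrable (measure_pmf pX) (\<lambda>v. real v powr r)"
    and "integrable (measure_pmf pY) (\<lambda>v. real v powr r)"
    and "kinetic_solution pX pY f1" and "kinetic_solution pX pY f2"
    and "integrable (measure_pmf (f1 0)) real" and "measure_pmf.expectation (f1 0) real = m0"
    and "integrable (measure_pmf (f2 0)) real" and "measure_pmf.expectation (f2 0) real = m0"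
    and "t > 0"
  shows "d_r r (f1 t) (f2 t) \<le> d_r r (f1 0) (f2 0) *
           ereal (exp ((measure_pmf.expectation pX real powr r
                        + measure_pmf.expectation pY real powr r - 1) * t))
     \<and> d_r_star r (f1 t) (f2 t) \<le> d_r_star r (f1 0) (f2 0) *
           ereal (exp ((measure_pmf.expectation pX real powr r
                        + measure_pmf.expectation pY real powr r - 1) * t))"
proof -
  note k1 = assms(6) and k2 = assms(7)
  have r: "1 < r" "r \<le> 2" using assms(3) by auto
  define \<mu>X where "\<mu>X = measure_pmf.expectation pX real"
  define \<mu>Y where "\<mu>Y = measure_pmf.expectation pY real"
  have iX: "integrable (measure_pmf pX) real" using integrable_real_of_powr[OF _ assms(4)] r by auto
  have iY: "integrable (measure_pmf pY) real" using integrable_real_of_powr[OF _ assms(5)] r by auto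
  have mX: "0 \<le> \<mu>X" unfolding \<mu>X_def by simp
  have mY: "0 \<le> \<mu>Y" unfolding \<mu>Y_def by simp
  define a where "a = \<mu>X powr r"
  define b where "b = \<mu>Y powr r"
  have ab: "0 \<le> a" "0 \<le> b" by (auto simp: a_def b_def)
  define K where "K = exp ((a + b - 1) * t)"
  have K: "K > 0" by (simp add: K_def)
  have T: "0 \<le> t" using assms(12) by simp
  define \<omega>1 where "\<omega>1 w = (1 - w) powr r" for w :: real
  have om1: "\<omega>1 (pgf p w) \<le> (measure_pmf.expectation p real powr r) * \<omega>1 w"
    if "integrable (measure_pmf p) real" "w \<in> {0<..1}" for p w
  proof -
    have w01: "w \<in> {0..1}" using that by auto
    have "0 \<le> 1 - pgf p w" using pgf_le1[OF w01] by simp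
    moreover have "1 - pgf p w \<le> measure_pmf.expectation p real * (1 - w)"
      by (rule one_minus_pgf[OF that(1) w01])
    ultimately have "(1 - pgf p w) powr r \<le> (measure_pmf.expectation p real * (1 - w)) powr r"
      using r by (intro powr_mono2) auto
    also have "\<dots> = measure_pmf.expectation p real powr r * (1 - w) powr r"
      using w01 by (auto intro: powr_mult)
    finally show ?thesis by (simp add: \<omega>1_def)
  qed
  define \<omega>2 where "\<omega>2 w = (- ln w) powr r" for w :: real
  have om2: "\<omega>2 (pgf p w) \<le> (measure_pmf.expectation p real powr r) * \<omega>2 w"
    if "integrable (measure_pmf p) real" "w \<in> {0<..1}" for p w
  proof -
    have w01: "w \<in> {0..1}" using that by auto
    have pp: "0 < pgf p w" "pgf p w \<le> 1" using pgf_pos[OF that(2)] pgf_le1[OF w01] by auto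
    have "0 \<le> - ln (pgf p w)" using pp by simp
    moreover have "- ln (pgf p w) \<le> measure_pmf.expectation p real * (- ln w)"
    proof -
      have "ln (exp (measure_pmf.expectation p real * ln w)) \<le> ln (pgf p w)"
        using pgf_ge_powr[OF that] pp by (subst ln_le_cancel_iff) auto
      then show ?thesis by simp
    qed
    ultimately have "(- ln (pgf p w)) powr r \<le> (measure_pmf.expectation p real * (- ln w)) powr r"
      using r by (intro powr_mono2) auto
    also have "\<dots> = measure_pmf.expectation p real powr r * (- ln w) powr r"
      by (rule powr_mult)
    finally show ?thesis by (simp add: \<omega>2_def)
  qed
  have part1: "d_r r (f1 t) (f2 t) \<le> d_r r (f1 0) (f2 0) * ereal K"
    unfolding d_r_def
  proof (rule ereal_sup_transfer[OF _ _ K])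
    show "{0<..<1::real} \<noteq> {}" by auto
  next
    fix D0 y :: real
    assume D0: "0 \<le> D0"
      and Fle: "\<And>x. x \<in> {0<..<1} \<Longrightarrow> \<bar>pgf (f1 0) x - pgf (f2 0) x\<bar> / \<bar>1 - x\<bar> powr r \<le> D0"
      and y: "y \<in> {0<..<1}"
    have init: "\<bar>pgf (f1 0) w - pgf (f2 0) w\<bar> \<le> D0 * \<omega>1 w" if "w \<in> {0<..1}" for w
    proof (cases "w = 1")
      case True
      then show ?thesis by (simp add: pgf_one \<omega>1_def)
    next
      case False
      then have w: "w \<in> {0<..<1}" using that by auto
      then have pos: "0 < (1 - w) powr r" by simp
      have "\<bar>pgf (f1 0) w - pgf (f2 0) w\<bar> / (1 - w) powr r \<le> D0" using Fle[OF w] w by simp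
      then show ?thesis using pos by (simp add: \<omega>1_def divide_le_eq mult.commute)
    qed
    have "\<bar>pgf (f1 t) y - pgf (f2 t) y\<bar> \<le> D0 * \<omega>1 y * exp ((a + b - 1) * t)"
      using main_bound[OF k1 k2, of \<omega>1 a b D0 t y] om1 iX iY init ab D0 T y
      by (auto simp: \<omega>1_def a_def b_def \<mu>X_def \<mu>Y_def)
    moreover have "0 < \<bar>1 - y\<bar> powr r" using y by simp
    ultimately show "\<bar>pgf (f1 t) y - pgf (f2 t) y\<bar> / \<bar>1 - y\<bar> powr r \<le> D0 * K"
      using y by (simp add: divide_le_eq \<omega>1_def K_def algebra_simps)
  qed simp
  have part2: "d_r_star r (f1 t) (f2 t) \<le> d_r_star r (f1 0) (f2 0) * ereal K"
    unfolding d_r_star_def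
  proof (rule ereal_sup_transfer[OF _ _ K])
    show "{0::real<..} \<noteq> {}" by auto
  next
    fix D0 y :: real
    assume D0: "0 \<le> D0"
      and Fle: "\<And>x. x \<in> {0<..} \<Longrightarrow> \<bar>laplace (f1 0) x - laplace (f2 0) x\<bar> / x powr r \<le> D0"
      and y: "y \<in> {0<..}"
    have init: "\<bar>pgf (f1 0) w - pgf (f2 0) w\<bar> \<le> D0 * \<omega>2 w" if "w \<in> {0<..1}" for w
    proof (cases "w = 1")
      case True
      then show ?thesis by (simp add: pgf_one \<omega>2_def)
    next
      case False
      then have w: "w \<in> {0<..<1}" using that by auto
      define \<xi> where "\<xi> = - ln w"
      have xi: "\<xi> \<in> {0<..}" using w by (simp add: \<xi>_def)
      have ew: "exp (- \<xi>) = w" using w by (simp add: \<xi>_def)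
      have pos: "0 < \<xi> powr r" using xi by simp
      have "\<bar>pgf (f1 0) w - pgf (f2 0) w\<bar> / \<xi> powr r \<le> D0"
        using Fle[OF xi] by (simp add: laplace_pgf ew)
      then show ?thesis using pos by (simp add: \<omega>2_def \<xi>_def[symmetric] divide_le_eq mult.commute)
    qed
    define z where "z = exp (- y)"
    have z: "z \<in> {0<..1}" using y by (simp add: z_def)
    have "\<bar>pgf (f1 t) z - pgf (f2 t) z\<bar> \<le> D0 * \<omega>2 z * exp ((a + b - 1) * t)"
      using main_bound[OF k1 k2, of \<omega>2 a b D0 t z] om2 iX iY init ab D0 T z
      by (auto simp: \<omega>2_def a_def b_def \<mu>X_def \<mu>Y_def)
    moreover have "\<omega>2 z = y powr r" by (simp add: \<omega>2_def z_def)
    moreover have "0 < y powr r" using y by simp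
    ultimately show "\<bar>laplace (f1 t) y - laplace (f2 t) y\<bar> / y powr r \<le> D0 * K"
      by (simp add: divide_le_eq laplace_pgf z_def[symmetric] K_def algebra_simps)
  qed simp
  show ?thesis using part1 part2 by (simp add: K_def a_def b_def \<mu>X_def \<mu>Y_def)
qed

end
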